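(* Let $\Omega\subsetneq\mathbb{C}$ be a simply connected domain and $Y\subsetneq\mathbb{C}$ an arbitrary domain. Then for every $s\in Y$ and every $w\in\Omega$, $\mathscr{C}_{\Omega}^{Y,s}(w)=\eta_\Omega(w)$.
   Context: $\mathbb{D}=\{z\in\mathbb{C}:|z|<1\}$. For domains $\Omega\subset\mathbb{C}$, $Y\subsetneq\mathbb{C}$, and points $w\in\Omega$, $s\in Y$, let $\mathcal{H}^s_w(\Omega,Y)$ be the set of holomorphic maps $h:\Omega\to Y$ with $h(w)=s$ and $h(z)\neq s$ for all $z\in\Omega\setminus\{w\}$. For a domain $Y\subsetneq\mathbb{C}$ and $v\in Y$, the Hurwitz density is $\eta_Y(v)=2/r_Y(v)$, where $r_Y(v)=\max\{h'(0): h:\mathbb{D}\to Y \text{ holomorphic},\ h(0)=v,\ h(z)\neq v \text{ for } z\in\mathbb{D}\setminus\{0\},\ h'(0)>0\}$. The Carathéodory density of the Hurwitz metric of $\Omega$ relative to $Y$ is $\mathscr{C}_{\Omega}^{Y,s}(w)=\sup\{\eta_Y(h(w))|h'(w)| : h\in\mathcal{H}^s_w(\Omega,Y)\}$ (defined to be $0$ if the family is empty). *)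

theory Defs
  imports "HOL-Complex_Analysis.Complex_Analysis"
begin

definition hurwitz_family :: "complex set \<Rightarrow> complex set \<Rightarrow> complex \<Rightarrow> complex \<Rightarrow> (complex \<Rightarrow> complex) set" where
  "hurwitz_family \<Omega> Y w s =
     {h. h holomorphic_on \<Omega> \<and> h ` \<Omega> \<subseteq> Y \<and> h w = s \<and> (\<forall>z\<in>\<Omega> - {w}. h z \<noteq> s)}"

text \<open>r_Y(v): the extremal value of h'(0) over h in H^v_0(D, Y) with h'(0) > 0
  (the paper's max; rendered as the supremum).\<close>
definition hurwitz_radius :: "complex set \<Rightarrow> complex \<Rightarrow> real" where
  "hurwitz_radius Y v =
     Sup {x::real. x > 0 \<and> (\<exists>h \<in> hurwitz_family (ball 0 1) Y 0 v. deriv h 0 = complex_of_real x)}"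

definition hurwitz_density :: "complex set \<Rightarrow> complex \<Rightarrow> real" where
  "hurwitz_density Y v = 2 / hurwitz_radius Y v"

definition caratheodory_hurwitz :: "complex set \<Rightarrow> complex set \<Rightarrow> complex \<Rightarrow> complex \<Rightarrow> real" where
  "caratheodory_hurwitz \<Omega> Y s w =
     (if hurwitz_family \<Omega> Y w s = {} then 0
      else Sup ((\<lambda>h. hurwitz_density Y (h w) * cmod (deriv h w)) ` hurwitz_family \<Omega> Y w s))"

end

theory Submission
  imports Defs
begin

lemma eq_on_ball_deriv:
  assumes "\<And>z. z \<in> ball 0 1 \<Longrightarrow> f z = g z"
  shows "deriv f 0 = deriv g (0::complex)"
proof (rule deriv_cong_ev)
  show "\<forall>\<^sub>F x in nhds 0. f x = g x"
    using eventually_nhds_in_open[of "ball (0::complex) 1" 0] assms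
    by (auto elim: eventually_mono)
qed simp

lemma rot_in:
  assumes k: "k \<in> hurwitz_family (ball 0 1) Y 0 v" and d: "deriv k 0 \<noteq> 0"
  shows "cmod (deriv k 0) \<in> {x::real. x > 0 \<and> (\<exists>h \<in> hurwitz_family (ball 0 1) Y 0 v. deriv h 0 = complex_of_real x)}"
proof -
  define u where "u = cnj (deriv k 0) / cmod (deriv k 0)"
  have nu: "cmod u = 1" using d by (simp add: u_def norm_divide)
  have hk: "k holomorphic_on ball 0 1" "k ` ball 0 1 \<subseteq> Y" "k 0 = v" "\<And>z. z \<in> ball 0 1 - {0} \<Longrightarrow> k z \<noteq> v"
    using k by (auto simp: hurwitz_family_def)
  have inb: "u * z \<in> ball 0 1" if "z \<in> ball 0 1" for z
    using that nu by (simp add: norm_mult)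
  define h where "h = (\<lambda>z. k (u * z))"
  have "h holomorphic_on ball 0 1"
    unfolding h_def
    by (rule holomorphic_on_compose_gen[of "\<lambda>z. u * z" _ k "ball 0 1", unfolded o_def])
       (auto intro: holomorphic_intros hk inb)
  moreover have "h ` ball 0 1 \<subseteq> Y" using hk inb by (auto simp: h_def)
  moreover have "h 0 = v" using hk by (simp add: h_def)
  moreover have "h z \<noteq> v" if "z \<in> ball 0 1 - {0}" for z
  proof -
    have "u \<noteq> 0" using nu by auto
    then have "u * z \<in> ball 0 1 - {0}" using that inb by auto
    then show ?thesis using hk(4) by (simp add: h_def)
  qed
  ultimately have hf: "h \<in> hurwitz_family (ball 0 1) Y 0 v" by (auto simp: hurwitz_family_def)
  have "(h has_field_derivative deriv k (u*0) * u) (at 0)"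
    unfolding h_def
    by (rule DERIV_chain2[of k, OF holomorphic_derivI[OF hk(1)]]) (auto intro!: derivative_eq_intros)
  then have "deriv h 0 = deriv k 0 * u" by (simp add: DERIV_imp_deriv)
  also have "\<dots> = complex_of_real (cmod (deriv k 0))"
    using d by (simp add: u_def complex_norm_square[symmetric] power2_eq_square field_simps)
  finally show ?thesis using hf d by auto
qed

lemma landau_bound:
  obtains B :: real where "\<And>Y s p k. p \<notin> Y \<Longrightarrow> k \<in> hurwitz_family (ball 0 1) Y 0 s \<Longrightarrow>
      cmod (deriv k 0) \<le> B * cmod (p - s)"
proof -
  obtain R where Rpos: "\<And>z. 0 < R z"
    and RL: "\<And>f. \<lbrakk>f holomorphic_on cball 0 (R(f 0));
                 \<And>z. norm z \<le> R(f 0) \<Longrightarrow> f z \<noteq> 0 \<and> f z \<noteq> 1\<rbrakk> \<Longrightarrow> norm(deriv f 0) < 1"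
    using Landau_Picard by metis
  define R0 where "R0 = R (-1)"
  have R0: "R0 > 0" using Rpos by (simp add: R0_def)
  have main: "cmod (deriv k 0) \<le> (4 * R0) * cmod (p - s)"
    if pY: "p \<notin> Y" and k: "k \<in> hurwitz_family (ball 0 1) Y 0 s" for Y s p k
  proof -
    have hk: "k holomorphic_on ball 0 1" "k ` ball 0 1 \<subseteq> Y" "k 0 = s" "\<And>z. z \<in> ball 0 1 - {0} \<Longrightarrow> k z \<noteq> s"
      using k by (auto simp: hurwitz_family_def)
    have sY: "s \<in> Y" using hk by force
    have ps: "p - s \<noteq> 0" using pY sY by auto
    define phi where "phi = (\<lambda>z. (k z - s) / (p - s))"
    have holphi: "(\<lambda>z. 1 - phi z) holomorphic_on ball 0 1"
      unfolding phi_def by (intro holomorphic_intros hk(1)) (use ps in auto)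
    have nz: "1 - phi z \<noteq> 0" if "z \<in> ball 0 1" for z
    proof
      assume "1 - phi z = 0"
      then have "k z = p" using ps by (simp add: phi_def field_simps)
      moreover have "k z \<in> Y" using hk(2) that by blast
      ultimately show False using pY by simp
    qed
    obtain q where holq: "q holomorphic_on ball 0 1" and qeq: "\<And>z. z \<in> ball 0 1 \<Longrightarrow> 1 - phi z = q z ^ 2"
      using contractible_imp_holomorphic_sqrt[OF holphi convex_imp_contractible[OF convex_ball] nz] by blast
    have q0sq: "q 0 ^ 2 = 1" using qeq[of 0] hk(3) by (simp add: phi_def)
    define q1 where "q1 = (\<lambda>z. q 0 * q z)"
    have holq1: "q1 holomorphic_on ball 0 1" unfolding q1_def by (intro holomorphic_intros holq)
    have q1eq: "1 - phi z = q1 z ^ 2" if "z \<in> ball 0 1" for z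
      using qeq[OF that] q0sq by (simp add: q1_def power_mult_distrib)
    have q10: "q1 0 = 1" using q0sq by (simp add: q1_def power2_eq_square)
    have q1nz: "q1 z \<noteq> 0" if "z \<in> ball 0 1" for z
      using q1eq[OF that] nz[OF that] by auto
    have q1nm1: "q1 z \<noteq> -1" if "z \<in> ball 0 1" for z
    proof
      assume a: "q1 z = -1"
      then have "phi z = 0" using q1eq[OF that] by simp
      then have "k z = s" using ps by (simp add: phi_def)
      then have "z = 0" using hk(4) that by blast
      then show False using a q10 by simp
    qed
    define Ff where "Ff = (\<lambda>z::complex. - q1 (z / of_real (2 * R0)))"
    have Ff0: "Ff 0 = -1" using q10 by (simp add: Ff_def)
    have inb: "z / of_real (2 * R0) \<in> ball 0 1" if "cmod z \<le> R0" for z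
      using that R0 by (simp add: norm_divide divide_simps)
    have RF: "R (Ff 0) = R0" by (simp add: Ff0 R0_def)
    have holFf': "Ff holomorphic_on cball 0 R0"
      unfolding Ff_def
      apply (rule holomorphic_on_minus)
      apply (rule holomorphic_on_compose_gen[of "\<lambda>z. z / of_real (2*R0)" _ q1 "ball 0 1", unfolded o_def])
      using inb holq1 by (auto intro: holomorphic_intros)
    have holFf: "Ff holomorphic_on cball 0 (R (Ff 0))" using holFf' RF by simp
    have "cmod (deriv Ff 0) < 1"
    proof (rule RL[OF holFf])
      fix z assume "cmod z \<le> R (Ff 0)"
      then have "z / of_real (2 * R0) \<in> ball 0 1" using inb by (simp add: Ff0 R0_def)
      then show "Ff z \<noteq> 0 \<and> Ff z \<noteq> 1"
        using q1nz q1nm1 unfolding Ff_def by (metis minus_equation_iff neg_equal_0_iff_equal)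
    qed
    moreover have "(Ff has_field_derivative - (deriv q1 (0 / of_real (2*R0)) * (1 / of_real (2*R0)))) (at 0)"
      unfolding Ff_def
      by (rule DERIV_chain2[of q1, OF holomorphic_derivI[OF holq1], THEN DERIV_minus])
         (use R0 in \<open>auto intro!: derivative_eq_intros\<close>)
    then have "deriv Ff 0 = - deriv q1 0 / of_real (2 * R0)" by (simp add: DERIV_imp_deriv)
    ultimately have dq1: "cmod (deriv q1 0) \<le> 2 * R0"
      using R0 by (simp add: norm_divide)
    have "deriv (\<lambda>z. 1 - phi z) 0 = deriv (\<lambda>z. q1 z ^ 2) 0"
      by (rule eq_on_ball_deriv) (use q1eq in auto)
    moreover have "((\<lambda>z. 1 - phi z) has_field_derivative - (deriv k 0 / (p - s))) (at 0)"
      unfolding phi_def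
      using ps by (auto intro!: derivative_eq_intros holomorphic_derivI[OF hk(1)])
    moreover have "((\<lambda>z. q1 z ^ 2) has_field_derivative 2 * q1 0 * deriv q1 0) (at 0)"
      by (auto intro!: derivative_eq_intros holomorphic_derivI[OF holq1])
    ultimately have "- (deriv k 0 / (p - s)) = 2 * deriv q1 0"
      using q10 by (simp add: DERIV_imp_deriv)
    then have "deriv k 0 = - 2 * deriv q1 0 * (p - s)" using ps by (simp add: field_simps)
    then have "cmod (deriv k 0) = 2 * cmod (deriv q1 0) * cmod (p - s)" by (simp add: norm_mult)
    also have "\<dots> \<le> 2 * (2 * R0) * cmod (p - s)"
      by (intro mult_right_mono mult_left_mono dq1) auto
    finally show ?thesis by simp
  qed
  show ?thesis by (rule that, rule main)
qed

lemma riemann_norm: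
  assumes "open \<Omega>" "simply_connected \<Omega>" "\<Omega> \<noteq> UNIV" "w \<in> \<Omega>"
  obtains F G where "F holomorphic_on \<Omega>" "G holomorphic_on ball 0 1"
    "\<And>z. z \<in> \<Omega> \<Longrightarrow> F z \<in> ball 0 1 \<and> G (F z) = z"
    "\<And>z. z \<in> ball 0 1 \<Longrightarrow> G z \<in> \<Omega> \<and> F (G z) = z" "F w = 0"
proof -
  obtain F0 G0 where F0: "F0 holomorphic_on \<Omega>" and G0: "G0 holomorphic_on ball 0 1"
    and FG0: "\<forall>z \<in> \<Omega>. F0 z \<in> ball 0 1 \<and> G0 (F0 z) = z"
    and GF0: "\<forall>z \<in> ball 0 1. G0 z \<in> \<Omega> \<and> F0 (G0 z) = z"
    using Riemann_mapping_theorem[of \<Omega>] assms by blast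
  have a: "F0 w \<in> ball 0 1" using FG0 assms(4) by blast
  obtain f g where "f (F0 w) = 0"
                "f holomorphic_on ball 0 1" "f ` ball 0 1 \<subseteq> ball 0 1"
                "g holomorphic_on ball 0 1" "g ` ball 0 1 \<subseteq> ball 0 1"
                "\<And>z. z \<in> ball 0 1 \<Longrightarrow> f (g z) = z"
                "\<And>z. z \<in> ball 0 1 \<Longrightarrow> g (f z) = z"
    using ball_biholomorphism_exists[OF a] by blast
  note fg = this
  show ?thesis
  proof (rule that[of "\<lambda>z. f (F0 z)" "\<lambda>z. G0 (g z)"])
    show "(\<lambda>z. f (F0 z)) holomorphic_on \<Omega>"
    proof -
      have "F0 ` \<Omega> \<subseteq> ball 0 1" using FG0 by blast
      then show ?thesis using holomorphic_on_compose_gen[OF F0 fg(2)] by (simp add: o_def)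
    qed
    show "(\<lambda>z. G0 (g z)) holomorphic_on ball 0 1"
      using holomorphic_on_compose_gen[OF fg(4) G0] fg(5) by (simp add: o_def)
    show "f (F0 z) \<in> ball 0 1 \<and> G0 (g (f (F0 z))) = z" if "z \<in> \<Omega>" for z
    proof -
      have "F0 z \<in> ball 0 1" "G0 (F0 z) = z" using FG0 that by auto
      moreover have "f (F0 z) \<in> ball 0 1" using fg(3) \<open>F0 z \<in> ball 0 1\<close> by blast
      ultimately show ?thesis using fg(7) by auto
    qed
    show "G0 (g z) \<in> \<Omega> \<and> f (F0 (G0 (g z))) = z" if "z \<in> ball 0 1" for z
    proof -
      have "g z \<in> ball 0 1" using fg(5) that by blast
      then show ?thesis using GF0 fg(6) that by auto
    qed
    show "f (F0 w) = 0" by fact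
  qed
qed

theorem corollary3p10:
  fixes \<Omega> Y :: "complex set" and s w :: complex
  assumes "open \<Omega>" "connected \<Omega>" "simply_connected \<Omega>" "\<Omega> \<noteq> UNIV"
    and "open Y" "connected Y" "Y \<noteq> UNIV"
    and "s \<in> Y" "w \<in> \<Omega>"
  shows "caratheodory_hurwitz \<Omega> Y s w = hurwitz_density \<Omega> w"
proof -
  note oO = assms(1) and oY = assms(5) and sY = assms(8) and wO = assms(9)
  obtain F G where holF: "F holomorphic_on \<Omega>" and holG: "G holomorphic_on ball 0 1"
    and FG: "\<And>z. z \<in> \<Omega> \<Longrightarrow> F z \<in> ball 0 1 \<and> G (F z) = z"
    and GF: "\<And>z. z \<in> ball 0 1 \<Longrightarrow> G z \<in> \<Omega> \<and> F (G z) = z" and Fw: "F w = 0"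
    using riemann_norm[OF assms(1,3,4,9)] by blast
  have G0: "G 0 = w" using FG[OF wO] Fw by simp
  have b0: "(0::complex) \<in> ball 0 1" by simp
  have dF: "\<And>z. z \<in> \<Omega> \<Longrightarrow> F field_differentiable at z"
    using holomorphic_on_imp_differentiable_at[OF holF oO] .
  have dG: "G field_differentiable at 0"
    using holomorphic_on_imp_differentiable_at[OF holG open_ball b0] .
  have "deriv (F \<circ> G) 0 = deriv (\<lambda>z. z) 0"
    by (rule eq_on_ball_deriv) (use GF in auto)
  then have dFG: "deriv F w * deriv G 0 = 1"
    using deriv_chain[OF dG, of F] dF[OF wO] G0 by simp
  define \<rho> where "\<rho> = cmod (deriv G 0)"
  have dGnz: "deriv G 0 \<noteq> 0" using dFG by auto
  have \<rho>pos: "\<rho> > 0" using dGnz by (simp add: \<rho>_def)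
  have nF: "cmod (deriv F w) = 1 / \<rho>"
    using arg_cong[OF dFG, of cmod] dGnz by (simp add: \<rho>_def norm_mult field_simps)
  have Gfam: "G \<in> hurwitz_family (ball 0 1) \<Omega> 0 w"
  proof -
    have "G z \<noteq> w" if "z \<in> ball 0 1 - {0}" for z
      using GF[of z] Fw that by auto
    then show ?thesis using holG GF G0 by (auto simp: hurwitz_family_def)
  qed
  have rO: "hurwitz_radius \<Omega> w = \<rho>"
    unfolding hurwitz_radius_def
  proof (rule cSup_eq_maximum)
    show "\<rho> \<in> {x. 0 < x \<and> (\<exists>h\<in>hurwitz_family (ball 0 1) \<Omega> 0 w. deriv h 0 = complex_of_real x)}"
      using rot_in[OF Gfam dGnz] by (simp add: \<rho>_def)
  next
    fix x assume "x \<in> {x. 0 < x \<and> (\<exists>h\<in>hurwitz_family (ball 0 1) \<Omega> 0 w. deriv h 0 = complex_of_real x)}"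
    then obtain k where xpos: "x > 0" and k: "k \<in> hurwitz_family (ball 0 1) \<Omega> 0 w"
      and dk: "deriv k 0 = complex_of_real x" by auto
    have hk: "k holomorphic_on ball 0 1" "k ` ball 0 1 \<subseteq> \<Omega>" "k 0 = w"
      using k by (auto simp: hurwitz_family_def)
    have holFk: "(F \<circ> k) holomorphic_on ball 0 1"
      by (rule holomorphic_on_compose_gen[OF hk(1) holF hk(2)])
    have "cmod (deriv (F \<circ> k) 0) \<le> 1"
    proof (rule Schwarz_Lemma(2)[where \<xi>=0, OF holFk])
      show "(F \<circ> k) 0 = 0" using hk Fw by simp
      show "cmod ((F \<circ> k) z) < 1" if "cmod z < 1" for z
      proof -
        have "k z \<in> \<Omega>" using hk(2) that by auto
        then show ?thesis using FG by auto
      qed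
    qed simp
    moreover have "deriv (F \<circ> k) 0 = deriv F w * deriv k 0"
      using deriv_chain[OF holomorphic_on_imp_differentiable_at[OF hk(1) open_ball b0], of F] dF[OF wO] hk(3)
      by simp
    ultimately have "(1/\<rho>) * x \<le> 1" using nF dk xpos by (simp add: norm_mult)
    then show "x \<le> \<rho>" using \<rho>pos by (simp add: field_simps)
  qed
  obtain p where pY: "p \<notin> Y" using assms(7) by blast
  obtain B where B: "\<And>Y s p k. p \<notin> Y \<Longrightarrow> k \<in> hurwitz_family (ball 0 1) Y 0 s \<Longrightarrow>
      cmod (deriv k 0) \<le> B * cmod (p - s)" using landau_bound by blast
  define AY where "AY = {x::real. x > 0 \<and> (\<exists>h \<in> hurwitz_family (ball 0 1) Y 0 s. deriv h 0 = complex_of_real x)}"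
  define rY where "rY = hurwitz_radius Y s"
  have rYdef: "rY = Sup AY" by (simp add: rY_def AY_def hurwitz_radius_def)
  have bddAY: "bdd_above AY"
  proof (rule bdd_aboveI)
    fix x assume "x \<in> AY"
    then obtain k where "x > 0" "k \<in> hurwitz_family (ball 0 1) Y 0 s" "deriv k 0 = complex_of_real x"
      by (auto simp: AY_def)
    then show "x \<le> B * cmod (p - s)" using B[OF pY] by fastforce
  qed
  obtain \<epsilon> where \<epsilon>: "\<epsilon> > 0" "ball s \<epsilon> \<subseteq> Y" using openE[OF oY sY] by blast
  define k0 where "k0 = (\<lambda>z::complex. s + of_real \<epsilon> * z)"
  have k0fam: "k0 \<in> hurwitz_family (ball 0 1) Y 0 s"
  proof -
    have "k0 z \<in> Y" if "z \<in> ball 0 1" for z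
    proof -
      have "dist s (k0 z) < \<epsilon>" using that \<epsilon>(1)
        by (simp add: k0_def dist_norm norm_mult)
      then show ?thesis using \<epsilon>(2) by auto
    qed
    moreover have "k0 holomorphic_on ball 0 1" unfolding k0_def by (intro holomorphic_intros)
    ultimately show ?thesis using \<epsilon>(1) by (auto simp: hurwitz_family_def k0_def)
  qed
  have dk0: "deriv k0 0 = of_real \<epsilon>"
    unfolding k0_def by (rule DERIV_imp_deriv) (auto intro!: derivative_eq_intros)
  have epsA: "\<epsilon> \<in> AY" using k0fam dk0 \<epsilon>(1) by (auto simp: AY_def)
  have rYpos: "rY > 0"
    using cSup_upper[OF epsA bddAY] \<epsilon>(1) rYdef by simp
  define FAM where "FAM = hurwitz_family \<Omega> Y w s"
  have comp_in: "(k \<circ> F) \<in> FAM" if k: "k \<in> hurwitz_family (ball 0 1) Y 0 s" for k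
  proof -
    have hk: "k holomorphic_on ball 0 1" "k ` ball 0 1 \<subseteq> Y" "k 0 = s" "\<And>z. z \<in> ball 0 1 - {0} \<Longrightarrow> k z \<noteq> s"
      using k by (auto simp: hurwitz_family_def)
    have Fim: "F ` \<Omega> \<subseteq> ball 0 1" using FG by auto
    have "(k \<circ> F) holomorphic_on \<Omega>" by (rule holomorphic_on_compose_gen[OF holF hk(1) Fim])
    moreover have "(k \<circ> F) z \<noteq> s" if "z \<in> \<Omega> - {w}" for z
    proof
      assume "(k \<circ> F) z = s"
      then have "F z = 0" using hk(4)[of "F z"] FG[of z] that by auto
      then have "z = w" using FG[of z] FG[OF wO] Fw that by auto
      then show False using that by simp
    qed
    moreover have "(k \<circ> F) ` \<Omega> \<subseteq> Y" using hk(2) Fim by (auto simp: image_subset_iff)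
    ultimately show ?thesis using hk Fw wO by (auto simp: FAM_def hurwitz_family_def)
  qed
  have FAMne: "FAM \<noteq> {}" using comp_in[OF k0fam] by blast
  have val: "hurwitz_density Y (h w) * cmod (deriv h w) = 2 / rY * cmod (deriv h w)" if "h \<in> FAM" for h
    using that by (simp add: FAM_def hurwitz_family_def hurwitz_density_def rY_def)
  have "caratheodory_hurwitz \<Omega> Y s w = Sup ((\<lambda>h. hurwitz_density Y (h w) * cmod (deriv h w)) ` FAM)"
    using FAMne by (simp add: caratheodory_hurwitz_def FAM_def)
  also have "\<dots> = 2 / \<rho>"
  proof (rule cSup_eq_non_empty)
    show "(\<lambda>h. hurwitz_density Y (h w) * cmod (deriv h w)) ` FAM \<noteq> {}" using FAMne by simp
  next
    fix y assume "y \<in> (\<lambda>h. hurwitz_density Y (h w) * cmod (deriv h w)) ` FAM"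
    then obtain h where hF: "h \<in> FAM" and y: "y = 2 / rY * cmod (deriv h w)" using val by auto
    have hh: "h holomorphic_on \<Omega>" "h ` \<Omega> \<subseteq> Y" "h w = s" "\<And>z. z \<in> \<Omega> - {w} \<Longrightarrow> h z \<noteq> s"
      using hF by (auto simp: FAM_def hurwitz_family_def)
    have Gim: "G ` ball 0 1 \<subseteq> \<Omega>" using GF by auto
    have hGfam: "(h \<circ> G) \<in> hurwitz_family (ball 0 1) Y 0 s"
    proof -
      have "(h \<circ> G) holomorphic_on ball 0 1" by (rule holomorphic_on_compose_gen[OF holG hh(1) Gim])
      moreover have "(h \<circ> G) z \<noteq> s" if "z \<in> ball 0 1 - {0}" for z
      proof
        assume "(h \<circ> G) z = s"
        then have "G z = w" using hh(4)[of "G z"] GF[of z] that by auto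
        then have "z = 0" using GF[of z] Fw that by auto
        then show False using that by simp
      qed
      moreover have "(h \<circ> G) ` ball 0 1 \<subseteq> Y" using hh(2) Gim by (auto simp: image_subset_iff)
      ultimately show ?thesis using hh G0 by (auto simp: hurwitz_family_def)
    qed
    have dhG: "deriv (h \<circ> G) 0 = deriv h w * deriv G 0"
      using deriv_chain[OF dG, of h] holomorphic_on_imp_differentiable_at[OF hh(1) oO wO] G0 by simp
    show "y \<le> 2 / \<rho>"
    proof (cases "deriv h w = 0")
      case True then show ?thesis using y \<rho>pos by simp
    next
      case False
      then have "deriv (h \<circ> G) 0 \<noteq> 0" using dhG dGnz by simp
      from rot_in[OF hGfam this] have "cmod (deriv (h \<circ> G) 0) \<in> AY" by (simp add: AY_def)
      then have "cmod (deriv h w) * \<rho> \<le> rY"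
        using cSup_upper[OF _ bddAY] rYdef dhG by (simp add: norm_mult \<rho>_def)
      then have "cmod (deriv h w) \<le> rY / \<rho>" using \<rho>pos by (simp add: field_simps)
      then have "2 / rY * cmod (deriv h w) \<le> 2 / rY * (rY / \<rho>)"
        using rYpos by (intro mult_left_mono) auto
      then show ?thesis using y rYpos by simp
    qed
  next
    fix y assume ub: "\<And>x. x \<in> (\<lambda>h. hurwitz_density Y (h w) * cmod (deriv h w)) ` FAM \<Longrightarrow> x \<le> y"
    have "x \<le> y * \<rho> * rY / 2" if "x \<in> AY" for x
    proof -
      obtain k where xpos: "x > 0" and k: "k \<in> hurwitz_family (ball 0 1) Y 0 s" and dk: "deriv k 0 = complex_of_real x"
        using \<open>x \<in> AY\<close> by (auto simp: AY_def)
      have hk: "k holomorphic_on ball 0 1" using k by (auto simp: hurwitz_family_def)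
      have kF: "k \<circ> F \<in> FAM" by (rule comp_in[OF k])
      have "deriv (k \<circ> F) w = deriv k 0 * deriv F w"
        using deriv_chain[OF dF[OF wO], of k] holomorphic_on_imp_differentiable_at[OF hk open_ball b0] Fw by simp
      then have "cmod (deriv (k \<circ> F) w) = x / \<rho>" using nF dk xpos by (simp add: norm_mult)
      moreover have "2 / rY * cmod (deriv (k \<circ> F) w) \<le> y"
      proof -
        have "hurwitz_density Y ((k \<circ> F) w) * cmod (deriv (k \<circ> F) w) \<le> y"
          using kF by (intro ub) (rule imageI)
        then show ?thesis using val[OF kF] by simp
      qed
      ultimately have "2 / rY * (x / \<rho>) \<le> y" by simp
      then show ?thesis using rYpos \<rho>pos by (simp add: field_simps)
    qed
    then have "rY \<le> y * \<rho> * rY / 2"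
      unfolding rYdef using epsA by (intro cSup_least) auto
    then show "2 / \<rho> \<le> y" using rYpos \<rho>pos by (simp add: field_simps)
  qed
  also have "\<dots> = hurwitz_density \<Omega> w" by (simp add: hurwitz_density_def rO)
  finally show ?thesis .
qed

end
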